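(* Let $(X,d)$ be a totally bounded metric space, $\emptyset\ne F\subseteq X$ with representation $(\tilde F_k)$, and let $(x_n)$ be a Cauchy sequence in $X$ with a selfmajorizing rate of metastability $\Psi$. (i) Assume $(x_n)$ is asymptotically regular w.r.t. $F$ with $\Phi^+$ a selfmajorizing rate of metastability for the asymptotic regularity. Then for all $k\in\mathbb{N}$ and $g:\mathbb{N}\to\mathbb{N}$ there exists $N\le\Omega_{k,g}(\Psi,\Phi^+)$ such that for all $i,j\in[N,N+g(N)]$: $d(x_i,x_j)\le\frac1{k+1}$ and $x_i\in AF_k$. (ii) Assume $(x_n)$ is asymptotically regular w.r.t. $F$ with $\Phi^{++}$ a rate of asymptotic regularity. Then for all $k\in\mathbb{N}$ and $g:\mathbb{N}\to\mathbb{N}$ there exists $N\le\tilde\Omega_{k,g}(\Psi,(\Phi^{++})^M)$ such that $d(x_i,x_j)\le\frac1{k+1}$ for all $i,j\in[N,N+g(N)]$ and $x_m\in AF_k$ for all $m\ge N$.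
   Context: Representation: $F=\bigcap_k\tilde F_k$, $AF_k:=\bigcap_{l\le k}\tilde F_l$. A rate of metastability for $(x_n)$ is $\Psi:\mathbb{N}\times\mathbb{N}^{\mathbb{N}}\to\mathbb{N}$ such that for all $k,g$ there is $N\le\Psi(k,g)$ with $d(x_i,x_j)\le\frac1{k+1}$ for all $i,j\in[N,N+g(N)]$. $(x_n)$ is asymptotically regular w.r.t. $F$ if for all $k$ there is $N$ with $x_m\in AF_k$ for all $m\ge N$; a rate of metastability for this is $\Phi^+:\mathbb{N}\times\mathbb{N}^{\mathbb{N}}\to\mathbb{N}$ such that for all $k,g$ there is $N\le\Phi^+(k,g)$ with $x_m\in AF_k$ for all $m\in[N,N+g(N)]$; a rate of asymptotic regularity is $\Phi^{++}:\mathbb{N}\to\mathbb{N}$ with $x_n\in AF_k$ for all $n\ge\Phi^{++}(k)$. For $f:\mathbb{N}\to\mathbb{N}$, $f^M(n):=\max\{f(i)\mid i\le n\}$. For $f,f':\mathbb{N}\to\mathbb{N}$, $f'\gtrsim f$ means: for all $n^*\ge n$, $f'(n^* )\ge f'(n)$ and $f'(n^* )\ge f(n)$. For $\Phi,\Phi^*:\mathbb{N}\times\mathbb{N}^{\mathbb{N}}\to\mathbb{N}$, $\Phi^*\gtrsim\Phi$ means: for all $k,k'\in\mathbb{N}$ and $g,g':\mathbb{N}\to\mathbb{N}$ with $k'\ge k$ and $g'\gtrsim g$, $\Phi^*(k',g')\ge\Phi^*(k,g)$ and $\Phi^*(k',g')\ge\Phi(k,g)$; $\Phi$ is selfmajorizing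 if $\Phi\gtrsim\Phi$. Given $k$ and $g$: $g^*(n):=n+g^M(n)$; $\tilde g_l(m):=g^*(\max\{l,m\})$; for $\delta:\mathbb{N}\times\mathbb{N}^{\mathbb{N}}\to\mathbb{N}$, $h_{k,g,\delta}(n):=g^*(\max\{n,\delta(k,\tilde g_n)\})$; $\Omega_{k,g}(\delta,\theta):=\max\{\delta(k,h_{k,g,\theta}),\ \theta(k,\tilde g_{\delta(k,h_{k,g,\theta})})\}$; $g_l(n):=g^M(n+l)+l$; $\tilde\Omega_{k,g}(\delta,f):=\delta(k,g_{f(k)})+f(k)$ for $f:\mathbb{N}\to\mathbb{N}$. *)

theory Defs
  imports "HOL-Analysis.Analysis"
begin

definition AF :: "(nat \<Rightarrow> 'a set) \<Rightarrow> nat \<Rightarrow> 'a set" where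
  "AF Ft k = (\<Inter>l\<in>{..k}. Ft l)"

definition meta_rate :: "(nat \<Rightarrow> 'a::metric_space) \<Rightarrow> (nat \<Rightarrow> (nat \<Rightarrow> nat) \<Rightarrow> nat) \<Rightarrow> bool" where
  "meta_rate x Psi \<longleftrightarrow> (\<forall>k g. \<exists>N\<le>Psi k g. \<forall>i\<in>{N..N + g N}. \<forall>j\<in>{N..N + g N}.
      dist (x i) (x j) \<le> 1 / (real k + 1))"

definition asym_reg :: "(nat \<Rightarrow> 'a) \<Rightarrow> (nat \<Rightarrow> 'a set) \<Rightarrow> bool" where
  "asym_reg x Ft \<longleftrightarrow> (\<forall>k. \<exists>N. \<forall>m\<ge>N. x m \<in> AF Ft k)"

definition ar_meta_rate :: "(nat \<Rightarrow> 'a) \<Rightarrow> (nat \<Rightarrow> 'a set) \<Rightarrow> (nat \<Rightarrow> (nat \<Rightarrow> nat) \<Rightarrow> nat) \<Rightarrow> bool" where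
  "ar_meta_rate x Ft Phi \<longleftrightarrow> (\<forall>k g. \<exists>N\<le>Phi k g. \<forall>m\<in>{N..N + g N}. x m \<in> AF Ft k)"

definition ar_rate :: "(nat \<Rightarrow> 'a) \<Rightarrow> (nat \<Rightarrow> 'a set) \<Rightarrow> (nat \<Rightarrow> nat) \<Rightarrow> bool" where
  "ar_rate x Ft Phi \<longleftrightarrow> (\<forall>k n. Phi k \<le> n \<longrightarrow> x n \<in> AF Ft k)"

definition fM :: "(nat \<Rightarrow> nat) \<Rightarrow> nat \<Rightarrow> nat" where
  "fM f n = Max (f ` {..n})"

definition majorizes :: "(nat \<Rightarrow> nat) \<Rightarrow> (nat \<Rightarrow> nat) \<Rightarrow> bool" where
  "majorizes f' f \<longleftrightarrow> (\<forall>n ns. n \<le> ns \<longrightarrow> f' ns \<ge> f' n \<and> f' ns \<ge> f n)"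

definition majorizes2 :: "(nat \<Rightarrow> (nat \<Rightarrow> nat) \<Rightarrow> nat) \<Rightarrow> (nat \<Rightarrow> (nat \<Rightarrow> nat) \<Rightarrow> nat) \<Rightarrow> bool" where
  "majorizes2 Phis Phi \<longleftrightarrow> (\<forall>k k' g g'. k \<le> k' \<and> majorizes g' g \<longrightarrow>
      Phis k' g' \<ge> Phis k g \<and> Phis k' g' \<ge> Phi k g)"

definition selfmaj :: "(nat \<Rightarrow> (nat \<Rightarrow> nat) \<Rightarrow> nat) \<Rightarrow> bool" where
  "selfmaj Phi \<longleftrightarrow> majorizes2 Phi Phi"

definition gstar :: "(nat \<Rightarrow> nat) \<Rightarrow> nat \<Rightarrow> nat" where
  "gstar g n = n + fM g n"

definition gtilde :: "(nat \<Rightarrow> nat) \<Rightarrow> nat \<Rightarrow> nat \<Rightarrow> nat" where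
  "gtilde g l m = gstar g (max l m)"

definition hfun :: "nat \<Rightarrow> (nat \<Rightarrow> nat) \<Rightarrow> (nat \<Rightarrow> (nat \<Rightarrow> nat) \<Rightarrow> nat) \<Rightarrow> nat \<Rightarrow> nat" where
  "hfun k g \<delta> n = gstar g (max n (\<delta> k (gtilde g n)))"

definition Omega :: "nat \<Rightarrow> (nat \<Rightarrow> nat) \<Rightarrow> (nat \<Rightarrow> (nat \<Rightarrow> nat) \<Rightarrow> nat)
    \<Rightarrow> (nat \<Rightarrow> (nat \<Rightarrow> nat) \<Rightarrow> nat) \<Rightarrow> nat" where
  "Omega k g \<delta> \<theta> = max (\<delta> k (hfun k g \<theta>)) (\<theta> k (gtilde g (\<delta> k (hfun k g \<theta>))))"

definition glow :: "(nat \<Rightarrow> nat) \<Rightarrow> nat \<Rightarrow> nat \<Rightarrow> nat" where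
  "glow g l n = fM g (n + l) + l"

definition Omega_tilde :: "nat \<Rightarrow> (nat \<Rightarrow> nat) \<Rightarrow> (nat \<Rightarrow> (nat \<Rightarrow> nat) \<Rightarrow> nat)
    \<Rightarrow> (nat \<Rightarrow> nat) \<Rightarrow> nat" where
  "Omega_tilde k g \<delta> f = \<delta> k (glow g (f k)) + f k"

end

theory Submission
  imports Defs
begin

lemma fM_ge: "g n \<le> fM g n"
  unfolding fM_def by (rule Max_ge) auto

lemma fM_mono: "n \<le> m \<Longrightarrow> fM g n \<le> fM g m"
  unfolding fM_def by (rule Max_mono) auto

lemma gstar_mono: "n \<le> m \<Longrightarrow> gstar g n \<le> gstar g m"
  unfolding gstar_def using fM_mono[of n m g] by simp

lemma gtilde_maj: "N1 \<le> L \<Longrightarrow> majorizes (gtilde g L) (gtilde g N1)"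
  unfolding majorizes_def gtilde_def
  by (auto intro!: gstar_mono)

theorem theorem5p8:
  fixes X F :: "'a::metric_space set" and Ft :: "nat \<Rightarrow> 'a set"
    and x :: "nat \<Rightarrow> 'a" and Psi :: "nat \<Rightarrow> (nat \<Rightarrow> nat) \<Rightarrow> nat"
  assumes "totally_bounded X"
    and "F \<subseteq> X" and "F \<noteq> {}"
    and "F = (\<Inter>k. Ft k)"
    and "\<And>n. x n \<in> X"
    and "Cauchy x"
    and "meta_rate x Psi" and "selfmaj Psi"
  shows "(\<forall>Phip. asym_reg x Ft \<and> ar_meta_rate x Ft Phip \<and> selfmaj Phip \<longrightarrow>
            (\<forall>k g. \<exists>N\<le>Omega k g Psi Phip. \<forall>i\<in>{N..N + g N}. \<forall>j\<in>{N..N + g N}.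
                dist (x i) (x j) \<le> 1 / (real k + 1) \<and> x i \<in> AF Ft k))
       \<and> (\<forall>Phipp. asym_reg x Ft \<and> ar_rate x Ft Phipp \<longrightarrow>
            (\<forall>k g. \<exists>N\<le>Omega_tilde k g Psi (fM Phipp).
                (\<forall>i\<in>{N..N + g N}. \<forall>j\<in>{N..N + g N}. dist (x i) (x j) \<le> 1 / (real k + 1))
                \<and> (\<forall>m\<ge>N. x m \<in> AF Ft k)))"
proof (intro conjI allI impI)
  fix Phip k g
  assume H: "asym_reg x Ft \<and> ar_meta_rate x Ft Phip \<and> selfmaj Phip"
  define h where "h = hfun k g Phip"
  obtain N1 where N1: "N1 \<le> Psi k h"
    and C: "\<forall>i\<in>{N1..N1 + h N1}. \<forall>j\<in>{N1..N1 + h N1}. dist (x i) (x j) \<le> 1 / (real k + 1)"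
    using assms(7) unfolding meta_rate_def by blast
  obtain N2 where N2: "N2 \<le> Phip k (gtilde g N1)"
    and A: "\<forall>m\<in>{N2..N2 + gtilde g N1 N2}. x m \<in> AF Ft k"
    using H unfolding ar_meta_rate_def by blast
  have "Phip k (gtilde g N1) \<le> Phip k (gtilde g (Psi k h))"
    using H gtilde_maj[OF N1, of g] unfolding selfmaj_def majorizes2_def by blast
  hence le: "max N1 N2 \<le> Omega k g Psi Phip"
    using N1 N2 unfolding Omega_def h_def by auto
  define N where "N = max N1 N2"
  define M where "M = max N1 (Phip k (gtilde g N1))"
  have NM: "N \<le> M" using N2 unfolding N_def M_def by auto
  have hN1: "h N1 = M + fM g M" unfolding h_def hfun_def gstar_def M_def by simp
  have gN: "g N \<le> fM g N" by (rule fM_ge)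
  have fMNM: "fM g N \<le> fM g M" using NM by (rule fM_mono)
  have gt: "gtilde g N1 N2 = N + fM g N" unfolding gtilde_def gstar_def N_def by simp
  show "\<exists>N\<le>Omega k g Psi Phip. \<forall>i\<in>{N..N + g N}. \<forall>j\<in>{N..N + g N}.
                dist (x i) (x j) \<le> 1 / (real k + 1) \<and> x i \<in> AF Ft k"
  proof (intro exI[of _ N] conjI ballI)
    show "N \<le> Omega k g Psi Phip" using le N_def by simp
  next
    fix i j assume i: "i \<in> {N..N + g N}" and j: "j \<in> {N..N + g N}"
    have "N1 \<le> N" unfolding N_def by simp
    then show "dist (x i) (x j) \<le> 1 / (real k + 1)"
      using C i j hN1 gN fMNM NM by auto
    show "x i \<in> AF Ft k" using A i gt gN unfolding N_def by auto
  qed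
next
  fix Phipp k g
  assume H: "asym_reg x Ft \<and> ar_rate x Ft Phipp"
  define n0 where "n0 = fM Phipp k"
  obtain N' where N': "N' \<le> Psi k (glow g n0)"
    and C: "\<forall>i\<in>{N'..N' + glow g n0 N'}. \<forall>j\<in>{N'..N' + glow g n0 N'}. dist (x i) (x j) \<le> 1 / (real k + 1)"
    using assms(7) unfolding meta_rate_def by blast
  have g1: "g (N' + n0) \<le> fM g (N' + n0)" by (rule fM_ge)
  have p: "Phipp k \<le> n0" unfolding n0_def by (rule fM_ge)
  show "\<exists>N\<le>Omega_tilde k g Psi (fM Phipp).
                (\<forall>i\<in>{N..N + g N}. \<forall>j\<in>{N..N + g N}. dist (x i) (x j) \<le> 1 / (real k + 1))
                \<and> (\<forall>m\<ge>N. x m \<in> AF Ft k)"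
  proof (intro exI[of _ "N' + n0"] conjI ballI allI impI)
    show "N' + n0 \<le> Omega_tilde k g Psi (fM Phipp)"
      using N' unfolding Omega_tilde_def n0_def by simp
  next
    fix i j assume i: "i \<in> {N' + n0..N' + n0 + g (N' + n0)}" and j: "j \<in> {N' + n0..N' + n0 + g (N' + n0)}"
    show "dist (x i) (x j) \<le> 1 / (real k + 1)"
      using C i j g1 unfolding glow_def by auto
  next
    fix m assume "N' + n0 \<le> m"
    then show "x m \<in> AF Ft k" using H p unfolding ar_rate_def by auto
  qed
qed

end
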